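(* Let $S$ be an infinite set and $\mathcal{F}\subseteq 2^S$ a family closed under finite unions (i.e. $A\cup B\in\mathcal{F}$ whenever $A,B\in\mathcal{F}$). Then for all classification problems $\mathbf{A}$ and $\mathbf{B}$ with $\mathbf{B}\leq\mathbf{A}$: if $\mathbf{A}\in \mathit{class}_{|\mathbf{A}|}(\mathcal{F})$, then $\mathbf{B}\in \mathit{class}_{|\mathbf{B}|}(\mathcal{F})$.
   Context: A vector $\mathbf{A}=(A_1,\dots,A_k)$ ($k\ge 1$) of subsets of $S$ has length $|\mathbf{A}|=k$. For vectors $\mathbf{B}=(B_1,\dots,B_m)$ and $\mathbf{A}=(A_1,\dots,A_k)$, $\mathbf{B}\leq\mathbf{A}$ means $1\le m\le k$ and there is an injective $\sigma:\{1,\dots,m\}\to\{1,\dots,k\}$ with $B_i\subseteq A_{\sigma(i)}$ for all $i$. A classification problem is a vector $(A_1,\dots,A_k)$, $k\ge1$, of pairwise disjoint infinite subsets of $S$. An $\mathcal{F}$-partition is a vector $(Q_1,\dots,Q_k)$ of pairwise disjoint sets $Q_i\in\mathcal{F}$ with $Q_1\cup\dots\cup Q_k=S$. $\mathit{class}_k(\mathcal{F})$ is the set of classification problems $\mathbf{A}$ with $|\mathbf{A}|=k$ for which an $\mathcal{F}$-partition $\mathbf{Q}$ with $|\mathbf{Q}|=k$ and $\mathbf{A}\leq\mathbf{Q}$ exists. *)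

theory Defs
  imports Main
begin

text \<open>Vectors (A_1,...,A_k) of subsets of S are represented as lists of sets, indexed from 0.\<close>

definition vec_le :: "'a set list \<Rightarrow> 'a set list \<Rightarrow> bool" where
  "vec_le B A \<longleftrightarrow> 1 \<le> length B \<and> length B \<le> length A \<and>
     (\<exists>\<sigma>::nat \<Rightarrow> nat. inj_on \<sigma> {..<length B} \<and> \<sigma> ` {..<length B} \<subseteq> {..<length A} \<and>
        (\<forall>i<length B. B ! i \<subseteq> A ! (\<sigma> i)))"

definition classification_problem :: "'a set \<Rightarrow> 'a set list \<Rightarrow> bool" where
  "classification_problem S A \<longleftrightarrow> 1 \<le> length A \<and>
     (\<forall>i<length A. A ! i \<subseteq> S \<and> infinite (A ! i)) \<and>
     (\<forall>i<length A. \<forall>j<length A. i \<noteq> j \<longrightarrow> A ! i \<inter> A ! j = {})"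

definition F_partition :: "'a set \<Rightarrow> 'a set set \<Rightarrow> 'a set list \<Rightarrow> bool" where
  "F_partition S F Q \<longleftrightarrow> 1 \<le> length Q \<and>
     (\<forall>i<length Q. Q ! i \<in> F) \<and>
     (\<forall>i<length Q. \<forall>j<length Q. i \<noteq> j \<longrightarrow> Q ! i \<inter> Q ! j = {}) \<and>
     \<Union> (set Q) = S"

definition class_k :: "'a set \<Rightarrow> 'a set set \<Rightarrow> nat \<Rightarrow> 'a set list set" where
  "class_k S F k = {A. classification_problem S A \<and> length A = k \<and>
     (\<exists>Q. F_partition S F Q \<and> length Q = k \<and> vec_le A Q)}"

end

theory Submission
  imports Defs
begin

lemma fin_union_in:
  assumes "\<And>X Y. X \<in> F \<Longrightarrow> Y \<in> F \<Longrightarrow> X \<union> Y \<in> F"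
  shows "finite T \<Longrightarrow> T \<noteq> {} \<Longrightarrow> T \<subseteq> F \<Longrightarrow> \<Union> T \<in> F"
proof (induction T rule: finite_ne_induct)
  case (singleton x) then show ?case by simp
next
  case (insert x T) then show ?case using assms by simp
qed

theorem proposition2p2:
  fixes S :: "'a set" and F :: "'a set set"
  assumes "infinite S"
    and "F \<subseteq> Pow S"
    and "\<And>X Y. X \<in> F \<Longrightarrow> Y \<in> F \<Longrightarrow> X \<union> Y \<in> F"
  shows "\<forall>A B. classification_problem S A \<and> classification_problem S B \<and> vec_le B A
           \<longrightarrow> A \<in> class_k S F (length A) \<longrightarrow> B \<in> class_k S F (length B)"
proof (intro allI impI)
  fix A B :: "'a set list"
  assume h: "classification_problem S A \<and> classification_problem S B \<and> vec_le B A"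
    and hA: "A \<in> class_k S F (length A)"
  from hA obtain Q where QP: "F_partition S F Q" and QL: "length Q = length A"
    and AQ: "vec_le A Q" unfolding class_k_def by blast
  define m where "m = length B"
  define k where "k = length Q"
  from h obtain \<tau> where t1: "inj_on \<tau> {..<m}" and t2: "\<tau> ` {..<m} \<subseteq> {..<length A}"
    and t3: "\<forall>i<m. B ! i \<subseteq> A ! (\<tau> i)" and m1: "1 \<le> m"
    unfolding vec_le_def m_def by blast
  from AQ obtain \<sigma> where s1: "inj_on \<sigma> {..<length A}" and s2: "\<sigma> ` {..<length A} \<subseteq> {..<k}"
    and s3: "\<forall>i<length A. A ! i \<subseteq> Q ! (\<sigma> i)"
    unfolding vec_le_def k_def by blast
  define \<rho> where "\<rho> = \<sigma> \<circ> \<tau>"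
  have r1: "inj_on \<rho> {..<m}" unfolding \<rho>_def by (rule comp_inj_on[OF t1 inj_on_subset[OF s1 t2]])
  have r2: "\<And>i. i < m \<Longrightarrow> \<rho> i < k" unfolding \<rho>_def using t2 s2 by auto
  have r3: "\<And>i. i < m \<Longrightarrow> B ! i \<subseteq> Q ! (\<rho> i)" unfolding \<rho>_def using t2 t3 s3 by fastforce
  have Qdisj: "\<And>i j. i < k \<Longrightarrow> j < k \<Longrightarrow> i \<noteq> j \<Longrightarrow> Q ! i \<inter> Q ! j = {}"
    using QP unfolding F_partition_def k_def by blast
  have QF: "\<And>i. i < k \<Longrightarrow> Q ! i \<in> F" using QP unfolding F_partition_def k_def by blast
  have QS: "\<Union> (set Q) = S" using QP unfolding F_partition_def by blast
  define J where "J = {j. j < k \<and> j \<notin> \<rho> ` {..<m-1}}"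
  define U where "U = \<Union> ((!) Q ` J)"
  have lastJ: "\<rho> (m-1) \<in> J"
  proof -
    have "m-1 < m" using m1 by simp
    have "\<rho> (m-1) \<notin> \<rho> ` {..<m-1}"
    proof
      assume "\<rho> (m-1) \<in> \<rho> ` {..<m-1}"
      then obtain i where i: "i < m-1" "\<rho> (m-1) = \<rho> i" by auto
      then have "m-1 = i" using inj_onD[OF r1 i(2)] \<open>m-1 < m\<close> i(1) by simp
      then show False using i by simp
    qed
    then show ?thesis unfolding J_def using r2 \<open>m-1 < m\<close> by simp
  qed
  have UF: "U \<in> F" unfolding U_def
    by (rule fin_union_in[OF assms(3)]) (use lastJ QF in \<open>auto simp: J_def\<close>)
  define Q' where "Q' = map (\<lambda>i. if i < m-1 then Q ! (\<rho> i) else U) [0..<m]"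
  have Q'L: "length Q' = m" unfolding Q'_def by simp
  have Q'n: "\<And>i. i < m \<Longrightarrow> Q' ! i = (if i < m-1 then Q ! (\<rho> i) else U)"
    unfolding Q'_def by simp
  have part: "F_partition S F Q'"
    unfolding F_partition_def
  proof (intro conjI allI impI)
    show "1 \<le> length Q'" using Q'L m1 by simp
    fix i assume i: "i < length Q'"
    then show "Q' ! i \<in> F" using Q'L Q'n QF r2 UF by auto
    fix j assume j: "j < length Q'" and ij: "i \<noteq> j"
    show "Q' ! i \<inter> Q' ! j = {}"
    proof (cases "i < m-1")
      case True
      show ?thesis
      proof (cases "j < m-1")
        case True
        have "\<rho> i \<noteq> \<rho> j" using r1 ij \<open>i < m-1\<close> True by (auto simp: inj_on_def)
        then show ?thesis using Qdisj r2 Q'n \<open>i < m-1\<close> True by auto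
      next
        case False
        have "\<rho> i \<notin> J" using \<open>i < m-1\<close> unfolding J_def by auto
        then have "\<forall>l\<in>J. Q ! (\<rho> i) \<inter> Q ! l = {}"
        proof (intro ballI)
          fix l assume "l \<in> J"
          then have "l < k" "l \<noteq> \<rho> i" using \<open>\<rho> i \<notin> J\<close> unfolding J_def by auto
          moreover have "\<rho> i < k" using r2[of i] \<open>i < m-1\<close> by simp
          ultimately show "Q ! (\<rho> i) \<inter> Q ! l = {}" using Qdisj by blast
        qed
        then show ?thesis using Q'n i j Q'L \<open>i < m-1\<close> False unfolding U_def by auto
      qed
    next
      case False
      then have jm: "j < m-1" using i j ij Q'L by auto
      have "\<rho> j \<notin> J" using jm unfolding J_def by auto
      then have "\<forall>l\<in>J. Q ! (\<rho> j) \<inter> Q ! l = {}"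
        proof (intro ballI)
          fix l assume "l \<in> J"
          then have "l < k" "l \<noteq> \<rho> j" using \<open>\<rho> j \<notin> J\<close> unfolding J_def by auto
          moreover have "\<rho> j < k" using r2[of j] jm by simp
          ultimately show "Q ! (\<rho> j) \<inter> Q ! l = {}" using Qdisj by blast
        qed
      then show ?thesis using Q'n i j Q'L jm False unfolding U_def by auto
    qed
  next
    show "\<Union> (set Q') = S"
    proof
      have "U \<subseteq> S" unfolding U_def J_def k_def using QS nth_mem by blast
      moreover have "\<And>i. i < m \<Longrightarrow> Q ! (\<rho> i) \<subseteq> S" using r2 QS nth_mem unfolding k_def
        by blast
      ultimately show "\<Union> (set Q') \<subseteq> S"
      proof (intro Union_least)
        fix X assume u: "U \<subseteq> S" and r: "\<And>i. i < m \<Longrightarrow> Q ! (\<rho> i) \<subseteq> S" and "X \<in> set Q'"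
        then obtain i where i: "i < m" "X = Q' ! i" using Q'L by (auto simp: in_set_conv_nth)
        show "X \<subseteq> S" using Q'n[OF i(1)] i u r[OF i(1)] by (cases "i < m-1") auto
      qed
    next
      show "S \<subseteq> \<Union> (set Q')"
      proof
        fix x assume "x \<in> S"
        then obtain j where j: "j < k" "x \<in> Q ! j" using QS unfolding k_def
          by (auto simp: in_set_conv_nth)
        show "x \<in> \<Union> (set Q')"
        proof (cases "j \<in> \<rho> ` {..<m-1}")
          case True
          then obtain i where "i < m-1" "j = \<rho> i" by auto
          then have "Q' ! i = Q ! j" "i < length Q'" using Q'n Q'L by auto
          then show ?thesis using j by (metis UnionI nth_mem)
        next
          case False
          then have "x \<in> U" using j unfolding U_def J_def by auto
          moreover have "Q' ! (m-1) = U" "m-1 < length Q'" using Q'n Q'L m1 by auto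
          ultimately show ?thesis by (metis UnionI nth_mem)
        qed
      qed
    qed
  qed
  have le: "vec_le B Q'" unfolding vec_le_def
  proof (intro conjI exI[of _ id])
    show "1 \<le> length B" using m1 m_def by simp
    show "length B \<le> length Q'" using Q'L m_def by simp
    show "inj_on id {..<length B}" by simp
    show "id ` {..<length B} \<subseteq> {..<length Q'}" using Q'L m_def by auto
    show "\<forall>i<length B. B ! i \<subseteq> Q' ! id i"
    proof (intro allI impI)
      fix i assume i: "i < length B"
      show "B ! i \<subseteq> Q' ! id i"
      proof (cases "i < m-1")
        case True then show ?thesis using r3 i Q'n m_def by auto
      next
        case False
        then have "i = m-1" using i m_def by auto
        then have "\<rho> i \<in> J" using lastJ by simp
        then have "Q ! (\<rho> i) \<subseteq> U" unfolding U_def by auto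
        then show ?thesis using r3 i Q'n m_def False by auto
      qed
    qed
  qed
  show "B \<in> class_k S F (length B)"
    unfolding class_k_def using h part le Q'L m_def by auto
qed

end
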